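(* Assume $\ker(K)\cap\ker(D)=\{0\}$ and let $\Psi$ be a reconstructor. Let $\{\delta_k\}_{k\in\mathbb{N}}$ be a sequence of noise levels with $\delta_k\to0$ as $k\to\infty$, and for each $k$ let $y^{\delta_k}=Kx^{GT}+e_k$ with $\|e_k\|_2\le\delta_k$. For each $k$ let $x^*_{\Psi,\delta_k}$ be the unique minimizer over $\mathcal{X}$ of $\mathcal{J}_{\Psi,\delta_k}(x)=\|Kx-y^{\delta_k}\|_2^2+\lambda\|w(\Psi(y^{\delta_k}))\odot|Dx|\|_1$. Then the sequence $\{x^*_{\Psi,\delta_k}\}_{k\in\mathbb{N}}$ is bounded.
   Context: Let $K\in\mathbb{R}^{m\times n}$ with $m\le n$, and let $D_h,D_v\in\mathbb{R}^{n\times n}$ be the discrete horizontal and vertical difference operators; $Dx=\begin{bmatrix}D_hx\\ D_vx\end{bmatrix}\in\mathbb{R}^{2n}$, and $|Dx|\in\mathbb{R}^n$, $(|Dx|)_i=\sqrt{(D_hx)_i^2+(D_vx)_i^2}$. $\mathcal{X}=\{x\in\mathbb{R}^n: x_i\ge 0\ \forall i\}$; $x^{GT}\in\mathcal{X}$ is fixed. Fix $\lambda>0$, $\eta>0$, $p\in(0,1)$, and for $\tilde x\in\mathbb{R}^n$ define $(w(\tilde{x}))_i=\big(\eta/\sqrt{\eta^2+(|D\tilde{x}|)_i^2}\big)^{1-p}$. A reconstructor is a Lipschitz continuous map $\Psi:\mathbb{R}^m\to\mathbb{R}^n$. $\odot$ is the entrywise product. *)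

theory Defs
  imports "HOL-Analysis.Analysis"
begin

definition nonneg_orthant :: "(real^'n) set" where
  "nonneg_orthant = {x. \<forall>i. x $ i \<ge> 0}"

definition absD :: "real^'n^'n \<Rightarrow> real^'n^'n \<Rightarrow> real^'n \<Rightarrow> real^'n" where
  "absD Dh Dv x = (\<chi> i. sqrt (((Dh *v x) $ i)\<^sup>2 + ((Dv *v x) $ i)\<^sup>2))"

definition weight :: "real^'n^'n \<Rightarrow> real^'n^'n \<Rightarrow> real \<Rightarrow> real \<Rightarrow> real^'n \<Rightarrow> real^'n" where
  "weight Dh Dv \<eta> p xt =
     (\<chi> i. (\<eta> / sqrt (\<eta>\<^sup>2 + ((absD Dh Dv xt) $ i)\<^sup>2)) powr (1 - p))"

definition norm1 :: "real^'n \<Rightarrow> real" where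
  "norm1 v = (\<Sum>i\<in>UNIV. \<bar>v $ i\<bar>)"

definition J_fun :: "real^'n^'m \<Rightarrow> real^'n^'n \<Rightarrow> real^'n^'n \<Rightarrow> real \<Rightarrow> real \<Rightarrow> real
    \<Rightarrow> (real^'m \<Rightarrow> real^'n) \<Rightarrow> real^'m \<Rightarrow> real^'n \<Rightarrow> real" where
  "J_fun K Dh Dv lam \<eta> p \<Psi> y x =
     (norm (K *v x - y))\<^sup>2
     + lam * norm1 (\<chi> i. (weight Dh Dv \<eta> p (\<Psi> y)) $ i * (absD Dh Dv x) $ i)"

definition reconstructor :: "(real^'m \<Rightarrow> real^'n) \<Rightarrow> bool" where
  "reconstructor \<Psi> \<longleftrightarrow> (\<exists>L. L-lipschitz_on UNIV \<Psi>)"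

end

theory Submission
  imports Defs
begin

theorem lemma8:
  fixes K :: "real^'n^'m" and Dh Dv :: "real^'n^'n" and xGT :: "real^'n"
    and lam \<eta> p :: real and \<Psi> :: "real^'m \<Rightarrow> real^'n"
    and \<delta> :: "nat \<Rightarrow> real" and e :: "nat \<Rightarrow> real^'m" and y :: "nat \<Rightarrow> real^'m"
    and xs :: "nat \<Rightarrow> real^'n"
  assumes mn: "CARD('m) \<le> CARD('n)"
    and xGT: "xGT \<in> nonneg_orthant"
    and lam: "lam > 0" and eta: "\<eta> > 0" and p: "0 < p" "p < 1"
    and ker: "\<forall>x. K *v x = 0 \<and> Dh *v x = 0 \<and> Dv *v x = 0 \<longrightarrow> x = 0"
    and rec: "reconstructor \<Psi>"
    and delta: "\<delta> \<longlonglongrightarrow> 0"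
    and y_def: "\<And>k. y k = K *v xGT + e k"
    and noise: "\<And>k. norm (e k) \<le> \<delta> k"
    and xs_min: "\<And>k. xs k \<in> nonneg_orthant \<and>
        (\<forall>x\<in>nonneg_orthant. J_fun K Dh Dv lam \<eta> p \<Psi> (y k) (xs k) \<le> J_fun K Dh Dv lam \<eta> p \<Psi> (y k) x)"
    and xs_unique: "\<And>k. \<forall>x\<in>nonneg_orthant.
        (\<forall>z\<in>nonneg_orthant. J_fun K Dh Dv lam \<eta> p \<Psi> (y k) x \<le> J_fun K Dh Dv lam \<eta> p \<Psi> (y k) z)
        \<longrightarrow> x = xs k"
  shows "bounded (range xs)"
proof -
  define J where "J k x = J_fun K Dh Dv lam \<eta> p \<Psi> (y k) x" for k x
  define W where "W k = weight Dh Dv \<eta> p (\<Psi> (y k))" for k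
  define A where "A x = absD Dh Dv x" for x
  have A_nn: "0 \<le> A x $ i" for x i unfolding A_def absD_def by simp
  have A_ge: "\<bar>(Dh *v x) $ i\<bar> \<le> A x $ i" "\<bar>(Dv *v x) $ i\<bar> \<le> A x $ i" for x i
    unfolding A_def absD_def by (simp_all add: real_le_rsqrt)
  have A_le: "A x $ i \<le> \<bar>(Dh *v x) $ i\<bar> + \<bar>(Dv *v x) $ i\<bar>" for x i
    unfolding A_def absD_def by (simp add: sqrt_sum_squares_le_sum_abs)
  have W_def2: "W k $ i = (\<eta> / sqrt (\<eta>\<^sup>2 + (A (\<Psi> (y k)) $ i)\<^sup>2)) powr (1 - p)" for k i
    unfolding W_def weight_def A_def by simp
  have W_le1: "W k $ i \<le> 1" for k i
  proof -
    have "\<eta> \<le> sqrt (\<eta>\<^sup>2 + (A (\<Psi> (y k)) $ i)\<^sup>2)" using eta by (simp add: real_le_rsqrt)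
    then have "\<bar>\<eta> / sqrt (\<eta>\<^sup>2 + (A (\<Psi> (y k)) $ i)\<^sup>2)\<bar> \<le> 1" using eta
      by (subst abs_of_nonneg) (auto simp: divide_le_eq_1 add_pos_nonneg)
    then show ?thesis unfolding W_def2 using p by (intro powr_le1) auto
  qed
  have W_nn: "0 \<le> W k $ i" for k i unfolding W_def2 by simp
  have J_eq: "J k x = (norm (K *v x - y k))\<^sup>2 + lam * (\<Sum>i\<in>UNIV. W k $ i * A x $ i)" for k x
  proof -
    have "\<bar>W k $ i * A x $ i\<bar> = W k $ i * A x $ i" for i using W_nn A_nn by simp
    then show ?thesis unfolding J_def J_fun_def norm1_def W_def A_def by simp
  qed
  from delta have "Bseq \<delta>" by (intro convergent_imp_Bseq) (auto simp: convergent_def)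
  then obtain B where B: "B > 0" "\<And>k. norm (\<delta> k) \<le> B" by (auto simp: Bseq_def)
  have eB: "norm (e k) \<le> B" for k using noise[of k] B(2)[of k] by auto
  define Y where "Y = norm (K *v xGT) + B"
  have yB: "norm (y k) \<le> Y" for k unfolding Y_def y_def using eB[of k] norm_triangle_ineq[of "K *v xGT" "e k"] by linarith
  from rec obtain L where L: "L-lipschitz_on UNIV \<Psi>" unfolding reconstructor_def by auto
  have L0: "0 \<le> L" using L by (simp add: lipschitz_on_def)
  define P where "P = norm (\<Psi> 0) + L * Y"
  have PB: "norm (\<Psi> (y k)) \<le> P" for k
  proof -
    have "dist (\<Psi> (y k)) (\<Psi> 0) \<le> L * dist (y k) 0" using L unfolding lipschitz_on_def by blast
    also have "\<dots> \<le> L * Y" using yB[of k] L0 by (simp add: mult_left_mono)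
    finally show ?thesis unfolding P_def using norm_triangle_ineq2[of "\<Psi> (y k)" "\<Psi> 0"]
      by (simp add: dist_norm)
  qed
  obtain Ch where Ch: "\<And>x. norm (Dh *v x) \<le> norm x * Ch"
    using bounded_linear.bounded[OF matrix_vector_mul_bounded_linear[of Dh]] by blast
  obtain Cv where Cv: "\<And>x. norm (Dv *v x) \<le> norm x * Cv"
    using bounded_linear.bounded[OF matrix_vector_mul_bounded_linear[of Dv]] by blast
  define M where "M = P * \<bar>Ch\<bar> + P * \<bar>Cv\<bar>"
  have AM: "A (\<Psi> (y k)) $ i \<le> M" for k i
  proof -
    have P0: "0 \<le> P" using PB[of 0] norm_ge_zero order_trans by blast
    have "\<bar>(Dh *v \<Psi> (y k)) $ i\<bar> \<le> P * \<bar>Ch\<bar>"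
    proof -
      have "\<bar>(Dh *v \<Psi> (y k)) $ i\<bar> \<le> norm (Dh *v \<Psi> (y k))" by (rule component_le_norm_cart)
      also have "\<dots> \<le> norm (\<Psi> (y k)) * Ch" by (rule Ch)
      also have "\<dots> \<le> norm (\<Psi> (y k)) * \<bar>Ch\<bar>" by (simp add: mult_left_mono)
      also have "\<dots> \<le> P * \<bar>Ch\<bar>" using PB[of k] by (simp add: mult_right_mono)
      finally show ?thesis .
    qed
    moreover have "\<bar>(Dv *v \<Psi> (y k)) $ i\<bar> \<le> P * \<bar>Cv\<bar>"
    proof -
      have "\<bar>(Dv *v \<Psi> (y k)) $ i\<bar> \<le> norm (Dv *v \<Psi> (y k))" by (rule component_le_norm_cart)
      also have "\<dots> \<le> norm (\<Psi> (y k)) * Cv" by (rule Cv)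
      also have "\<dots> \<le> norm (\<Psi> (y k)) * \<bar>Cv\<bar>" by (simp add: mult_left_mono)
      also have "\<dots> \<le> P * \<bar>Cv\<bar>" using PB[of k] by (simp add: mult_right_mono)
      finally show ?thesis .
    qed
    ultimately show ?thesis using A_le[of "\<Psi> (y k)" i] unfolding M_def by linarith
  qed
  define w0 where "w0 = (\<eta> / sqrt (\<eta>\<^sup>2 + M\<^sup>2)) powr (1 - p)"
  have w0: "0 < w0" unfolding w0_def using eta by simp
  have Ww0: "w0 \<le> W k $ i" for k i
  proof -
    have "A (\<Psi> (y k)) $ i \<le> M" by (rule AM)
    then have "(A (\<Psi> (y k)) $ i)\<^sup>2 \<le> M\<^sup>2" using A_nn by (intro power_mono) auto
    then have "sqrt (\<eta>\<^sup>2 + (A (\<Psi> (y k)) $ i)\<^sup>2) \<le> sqrt (\<eta>\<^sup>2 + M\<^sup>2)" by simp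
    moreover have "0 < sqrt (\<eta>\<^sup>2 + (A (\<Psi> (y k)) $ i)\<^sup>2)" using eta
      by (simp add: add_pos_nonneg)
    ultimately have "\<eta> / sqrt (\<eta>\<^sup>2 + M\<^sup>2) \<le> \<eta> / sqrt (\<eta>\<^sup>2 + (A (\<Psi> (y k)) $ i)\<^sup>2)"
      using eta by (intro divide_left_mono) auto
    then show ?thesis unfolding w0_def W_def2 using p eta by (intro powr_mono2) auto
  qed
  define C where "C = B\<^sup>2 + lam * (\<Sum>i\<in>UNIV. A xGT $ i)"
  have JC: "J k (xs k) \<le> C" for k
  proof -
    have "J k (xs k) \<le> J k xGT" using xs_min[of k] xGT unfolding J_def by blast
    also have "\<dots> \<le> C"
    proof -
      have "(norm (K *v xGT - y k))\<^sup>2 \<le> B\<^sup>2" unfolding y_def using eB[of k]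
        by (simp add: power_mono)
      moreover have "(\<Sum>i\<in>UNIV. W k $ i * A xGT $ i) \<le> (\<Sum>i\<in>UNIV. A xGT $ i)"
        by (intro sum_mono) (metis A_nn W_le1 mult_left_le_one_le W_nn)
      ultimately show ?thesis unfolding J_eq C_def using lam by (simp add: add_mono)
    qed
    finally show ?thesis .
  qed
  have Kb: "norm (K *v xs k) \<le> sqrt C + Y" for k
  proof -
    have s: "0 \<le> lam * (\<Sum>i\<in>UNIV. W k $ i * A (xs k) $ i)"
      using lam W_nn A_nn by (intro mult_nonneg_nonneg sum_nonneg) auto
    have "(norm (K *v xs k - y k))\<^sup>2 \<le> C" using JC[of k] s unfolding J_eq by linarith
    then have "norm (K *v xs k - y k) \<le> sqrt C" by (simp add: real_le_rsqrt)
    then show ?thesis using yB[of k] norm_triangle_ineq[of "K *v xs k - y k" "y k"] by simp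
  qed
  define Q where "Q = C / (lam * w0)"
  have AQ: "A (xs k) $ i \<le> Q" for k i
  proof -
    have s: "0 \<le> (norm (K *v xs k - y k))\<^sup>2" by simp
    have "W k $ i * A (xs k) $ i \<le> (\<Sum>j\<in>UNIV. W k $ j * A (xs k) $ j)"
      using W_nn A_nn by (intro member_le_sum) auto
    then have "lam * (W k $ i * A (xs k) $ i) \<le> C" using JC[of k] s lam unfolding J_eq
      by (smt (verit) mult_left_mono)
    moreover have "lam * (w0 * A (xs k) $ i) \<le> lam * (W k $ i * A (xs k) $ i)"
      using Ww0 A_nn lam by (intro mult_left_mono mult_right_mono) auto
    ultimately have "(lam * w0) * A (xs k) $ i \<le> C" by (simp add: mult.assoc)
    then show ?thesis unfolding Q_def using lam w0 by (simp add: pos_le_divide_eq mult.commute)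
  qed
  have Dhb: "norm (Dh *v xs k) \<le> real CARD('n) * Q" for k
  proof -
    have "norm (Dh *v xs k) \<le> (\<Sum>i\<in>UNIV. \<bar>(Dh *v xs k) $ i\<bar>)" by (rule norm_le_l1_cart)
    also have "\<dots> \<le> (\<Sum>i\<in>(UNIV::'n set). Q)" by (intro sum_mono) (meson A_ge AQ order_trans)
    finally show ?thesis by simp
  qed
  have Dvb: "norm (Dv *v xs k) \<le> real CARD('n) * Q" for k
  proof -
    have "norm (Dv *v xs k) \<le> (\<Sum>i\<in>UNIV. \<bar>(Dv *v xs k) $ i\<bar>)" by (rule norm_le_l1_cart)
    also have "\<dots> \<le> (\<Sum>i\<in>(UNIV::'n set). Q)" by (intro sum_mono) (meson A_ge AQ order_trans)
    finally show ?thesis by simp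
  qed
  define f where "f x = (K *v x, Dh *v x, Dv *v x)" for x
  have linf: "linear f" unfolding f_def
    by (intro bounded_linear.linear bounded_linear_Pair matrix_vector_mul_bounded_linear)
  have injf: "inj f"
  proof (rule linear_injective_0[OF linf, THEN iffD2], intro allI impI)
    fix x assume "f x = 0"
    then have "K *v x = 0 \<and> Dh *v x = 0 \<and> Dv *v x = 0" unfolding f_def
      by (simp add: zero_prod_def)
    then show "x = 0" using ker by blast
  qed
  obtain g where g: "linear g" "g \<circ> f = id" using linear_injective_left_inverse[OF linf injf] by blast
  have bfx: "bounded (range (f \<circ> xs))"
    unfolding bounded_iff
  proof (intro exI ballI)
    fix z assume "z \<in> range (f \<circ> xs)"
    then obtain k where z: "z = f (xs k)" by auto
    have "norm z \<le> norm (K *v xs k) + (norm (Dh *v xs k) + norm (Dv *v xs k))"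
      unfolding z f_def using norm_Pair_le[of "K *v xs k" "(Dh *v xs k, Dv *v xs k)"]
        norm_Pair_le[of "Dh *v xs k" "Dv *v xs k"] by linarith
    also have "\<dots> \<le> (sqrt C + Y) + (real CARD('n) * Q + real CARD('n) * Q)"
      using Kb[of k] Dhb[of k] Dvb[of k] by linarith
    finally show "norm z \<le> (sqrt C + Y) + (real CARD('n) * Q + real CARD('n) * Q)" .
  qed
  have gf: "g (f x) = x" for x using g(2) by (metis comp_apply id_apply)
  have rg: "g ` range (f \<circ> xs) = range xs" by (simp add: image_image gf)
  have blg: "bounded_linear g" using g(1) linear_conv_bounded_linear by blast
  show ?thesis using bounded_linear_image[OF bfx blg] unfolding rg .
qed

end
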